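(* Let $p\ge 2$, let $\mathcal{N}$ be a finite nonempty index set, let $\{\hat{\bm{\Sigma}}(t_i)\}_{i\in\mathcal{N}}$ be $p\times p$ symmetric positive semidefinite matrices, and let $\lambda>0$. For a tuple $\mathbb{\Omega}=\{\bm{\Omega}(t_i)\}_{i\in\mathcal{N}}$ of $p\times p$ symmetric positive definite matrices define $$L(\mathbb{\Omega})=\frac{1}{\sqrt{|\mathcal{N}|}}\sum_{i\in\mathcal{N}}\Big[\operatorname{tr}\big(\bm{\Omega}(t_i)\hat{\bm{\Sigma}}(t_i)\big)-\log\det\bm{\Omega}(t_i)\Big]+\lambda\sum_{u\neq v}\sqrt{\sum_{i\in\mathcal{N}}\Omega_{uv}(t_i)^2},$$ where $\Omega_{uv}(t_i)$ denotes the $(u,v)$ entry of $\bm{\Omega}(t_i)$. Suppose the minimizer $\{\hat{\bm{\Omega}}(t_i)\}_{i\in\mathcal{N}}$ of $L$ over tuples of positive definite matrices has, after a common permutation of the $p$ variables, the block-diagonal form $$\hat{\bm{\Omega}}(t_i)=\begin{pmatrix}\hat{\bm{\Omega}}_1(t_i)&\bm{0}\\ \bm{0}&\hat{\bm{\Omega}}_2(t_i)\end{pmatrix},\qquad i\in\mathcal{N},$$ where all $\hat{\bm{\Omega}}_1(t_i)$ have the same dimension, corresponding to a set $G_1$ of variables, and the $\hat{\bm{\Omega}}_2(t_i)$ correspond to the complementary set $G_2$. Then $\{\hat{\bm{\Omega}}_1(t_i)\}_{i\in\mathcal{N}}$ minimizes the objective of the same form as $L$ (same $\mathcal{N}$,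 same $\lambda$) in which each $\hat{\bm{\Sigma}}(t_i)$ is replaced by its principal submatrix on the variables in $G_1$, and likewise $\{\hat{\bm{\Omega}}_2(t_i)\}_{i\in\mathcal{N}}$ minimizes the analogous objective on the variables in $G_2$.
   Context: In the paper, $\mathcal{N}=\mathcal{N}_{k,d}=\{i:|t_i-t_k|\le d\}$ is the set of indices of observation times $0\le t_1\le\dots\le t_N\le 1$ within distance $d$ of $t_k$, and $\hat{\bm{\Sigma}}(t)=\sum_{j=1}^N \omega_h^{t_j}(t)\bm{x}_j\bm{x}_j^T$ is a kernel estimate of the covariance matrix, with weights $\omega_h^{t_j}(t)=K((t_j-t)/h)/\sum_{j'}K((t_{j'}-t)/h)$ for a symmetric nonnegative kernel $K$ and bandwidth $h>0$, based on observations $\bm{x}_j\in\mathbb{R}^p$. The objective $L$ is strictly convex, so its minimizer, when it exists, is unique. *)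

theory Defs
  imports "HOL-Analysis.Analysis"
begin

text \<open>Matrices are represented as functions nat => nat => real; a matrix "on the
variable set G" only uses its entries indexed by G x G. Principal submatrices on
a subset G1 of the variables are thus obtained simply by reading the same function on G1.\<close>

definition sym_on :: "nat set \<Rightarrow> (nat \<Rightarrow> nat \<Rightarrow> real) \<Rightarrow> bool" where
  "sym_on G A \<longleftrightarrow> (\<forall>u\<in>G. \<forall>v\<in>G. A u v = A v u)"

definition quad_on :: "nat set \<Rightarrow> (nat \<Rightarrow> nat \<Rightarrow> real) \<Rightarrow> (nat \<Rightarrow> real) \<Rightarrow> real" where
  "quad_on G A x = (\<Sum>u\<in>G. \<Sum>v\<in>G. x u * A u v * x v)"

definition psd_on :: "nat set \<Rightarrow> (nat \<Rightarrow> nat \<Rightarrow> real) \<Rightarrow> bool" where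
  "psd_on G A \<longleftrightarrow> sym_on G A \<and> (\<forall>x. quad_on G A x \<ge> 0)"

definition pd_on :: "nat set \<Rightarrow> (nat \<Rightarrow> nat \<Rightarrow> real) \<Rightarrow> bool" where
  "pd_on G A \<longleftrightarrow> sym_on G A \<and> (\<forall>x. (\<exists>u\<in>G. x u \<noteq> 0) \<longrightarrow> quad_on G A x > 0)"

definition det_on :: "nat set \<Rightarrow> (nat \<Rightarrow> nat \<Rightarrow> real) \<Rightarrow> real" where
  "det_on G A = (\<Sum>\<pi> \<in> {\<pi>. \<pi> permutes G}. of_int (sign \<pi>) * (\<Prod>u\<in>G. A u (\<pi> u)))"

definition tr_prod_on :: "nat set \<Rightarrow> (nat \<Rightarrow> nat \<Rightarrow> real) \<Rightarrow> (nat \<Rightarrow> nat \<Rightarrow> real) \<Rightarrow> real" where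
  "tr_prod_on G A B = (\<Sum>u\<in>G. \<Sum>v\<in>G. A u v * B v u)"

definition objL :: "nat set \<Rightarrow> 'i set \<Rightarrow> ('i \<Rightarrow> nat \<Rightarrow> nat \<Rightarrow> real) \<Rightarrow> real
    \<Rightarrow> ('i \<Rightarrow> nat \<Rightarrow> nat \<Rightarrow> real) \<Rightarrow> real" where
  "objL G N S lam \<Omega> =
     (1 / sqrt (real (card N))) * (\<Sum>i\<in>N. tr_prod_on G (\<Omega> i) (S i) - ln (det_on G (\<Omega> i)))
     + lam * (\<Sum>(u,v) \<in> {(u,v). u \<in> G \<and> v \<in> G \<and> u \<noteq> v}. sqrt (\<Sum>i\<in>N. (\<Omega> i u v)^2))"

definition feasible :: "nat set \<Rightarrow> 'i set \<Rightarrow> ('i \<Rightarrow> nat \<Rightarrow> nat \<Rightarrow> real) \<Rightarrow> bool" where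
  "feasible G N \<Omega> \<longleftrightarrow> (\<forall>i\<in>N. pd_on G (\<Omega> i))"

definition is_minimizer :: "nat set \<Rightarrow> 'i set \<Rightarrow> ('i \<Rightarrow> nat \<Rightarrow> nat \<Rightarrow> real) \<Rightarrow> real
    \<Rightarrow> ('i \<Rightarrow> nat \<Rightarrow> nat \<Rightarrow> real) \<Rightarrow> bool" where
  "is_minimizer G N S lam \<Omega> \<longleftrightarrow> feasible G N \<Omega> \<and>
     (\<forall>\<Omega>'. feasible G N \<Omega>' \<longrightarrow> objL G N S lam \<Omega> \<le> objL G N S lam \<Omega>')"

end

theory Submission
  imports Defs "Jordan_Normal_Form.Determinant"
begin

lemma det_on_jnf: "det_on {0..<n} B = det (mat n n (\<lambda>(i,j). B i j))"
  unfolding det_on_def by (subst det_def'[of _ n]) (auto intro!: sum.cong prod.cong)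

lemma pd_det_nz:
  assumes "pd_on {0..<n} B"
  shows "det_on {0..<n} B \<noteq> 0"
proof
  assume "det_on {0..<n} B = 0"
  then obtain v where v: "v \<in> carrier_vec n" "v \<noteq> 0\<^sub>v n" "mat n n (\<lambda>(i,j). B i j) *\<^sub>v v = 0\<^sub>v n"
    using det_0_iff_vec_prod_zero[of "mat n n (\<lambda>(i,j). B i j)" n] det_on_jnf by auto
  have row0: "(\<Sum>j\<in>{0..<n}. B i j * v $ j) = 0" if "i < n" for i
  proof -
    have "(mat n n (\<lambda>(i,j). B i j) *\<^sub>v v) $ i = 0" using v(3) that by simp
    thus ?thesis using that v(1) by (simp add: scalar_prod_def)
  qed
  have "\<exists>u\<in>{0..<n}. v $ u \<noteq> 0"
  proof (rule ccontr)
    assume "\<not> ?thesis"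
    hence "v = 0\<^sub>v n" using v(1) by (intro eq_vecI) auto
    thus False using v(2) by simp
  qed
  hence "quad_on {0..<n} B (\<lambda>u. v $ u) > 0" using assms unfolding pd_on_def by auto
  moreover have "quad_on {0..<n} B (\<lambda>u. v $ u) = 0"
    unfolding quad_on_def
    by (simp add: mult.assoc flip: sum_distrib_left) (simp add: row0)
  ultimately show False by simp
qed

lemma det_on_id:
  assumes "finite G"
  shows "det_on G (\<lambda>u v. if u = v then 1 else 0) = 1"
proof -
  have "det_on G (\<lambda>u v. if u = v then 1 else 0) =
     (\<Sum>\<pi> \<in> {\<pi>. \<pi> permutes G}. if \<pi> = id then 1 else 0)"
    unfolding det_on_def
  proof (rule sum.cong[OF refl])
    fix \<pi> assume "\<pi> \<in> {\<pi>. \<pi> permutes G}"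
    hence pi: "\<pi> permutes G" by simp
    show "of_int (sign \<pi>) * (\<Prod>u\<in>G. if u = \<pi> u then 1 else 0) = (if \<pi> = id then 1 else (0::real))"
    proof (cases "\<pi> = id")
      case True thus ?thesis by simp
    next
      case False
      then obtain u where "\<pi> u \<noteq> u" by (auto simp: fun_eq_iff)
      moreover hence "u \<in> G" using pi by (meson permutes_not_in)
      ultimately have "(\<Prod>u\<in>G. if u = \<pi> u then 1 else 0) = (0::real)"
        using assms by (intro prod_zero bexI[of _ u]) auto
      thus ?thesis using False by simp
    qed
  qed
  also have "\<dots> = (1::real)"
  proof -
    have fin: "finite {\<pi>. \<pi> permutes G}" using assms by (rule finite_permutations)
    have "(\<Sum>\<pi> \<in> {\<pi>. \<pi> permutes G}. if \<pi> = id then 1 else (0::real)) =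
       1 + (\<Sum>\<pi> \<in> {\<pi>. \<pi> permutes G} - {id}. if \<pi> = id then 1 else (0::real))"
      using sum.remove[of "{\<pi>. \<pi> permutes G}" id "\<lambda>\<pi>. if \<pi> = id then 1 else (0::real)"] fin permutes_id[of G]
      by simp
    also have "\<dots> = 1" by simp
    finally show ?thesis .
  qed
  finally show ?thesis .
qed

lemma quad_pos_sq:
  assumes "finite G" "\<exists>u\<in>G. x u \<noteq> (0::real)"
  shows "(\<Sum>u\<in>G. x u * x u) > 0"
proof -
  obtain u where u: "u \<in> G" "x u \<noteq> 0" using assms by auto
  have "(\<Sum>u\<in>G. x u * x u) \<ge> x u * x u"
    using assms(1) u(1) by (intro member_le_sum) auto
  moreover have "x u * x u > 0" using u(2) by (cases "x u > 0") (auto simp: mult_pos_pos mult_neg_neg)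
  ultimately show ?thesis by linarith
qed

lemma pd_det_pos:
  assumes "pd_on {0..<n} B"
  shows "det_on {0..<n} B > 0"
proof -
  define C where "C t = (\<lambda>u v. t * B u v + (1-t) * (if u = v then 1 else 0::real))" for t
  define f where "f t = det_on {0..<n} (C t)" for t
  have C1: "C 1 = B" by (simp add: C_def)
  have Cpd: "pd_on {0..<n} (C t)" if "0 \<le> t" "t \<le> 1" for t
    unfolding pd_on_def
  proof safe
    show "sym_on {0..<n} (C t)" using assms unfolding pd_on_def sym_on_def C_def by auto
  next
    fix x :: "nat \<Rightarrow> real" and u assume u: "u \<in> {0..<n}" "x u \<noteq> 0"
    have q: "quad_on {0..<n} (C t) x = t * quad_on {0..<n} B x + (1-t) * (\<Sum>u\<in>{0..<n}. x u * x u)"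
    proof -
      have e: "x u * C t u v * x v = t * (x u * B u v * x v) + (if v = u then (1-t) * (x u * x v) else 0)" for u v
        unfolding C_def by (auto simp: algebra_simps)
      show ?thesis unfolding quad_on_def e
        by (simp add: sum.distrib sum_distrib_left)
    qed
    have a: "quad_on {0..<n} B x > 0" using assms u(1,2) unfolding pd_on_def by blast
    have b: "(\<Sum>u\<in>{0..<n}. x u * x u) > 0" using u by (intro quad_pos_sq) auto
    show "quad_on {0..<n} (C t) x > 0"
    proof (cases "t = 1")
      case True thus ?thesis using q a by simp
    next
      case False
      hence "(1-t) * (\<Sum>u\<in>{0..<n}. x u * x u) > 0" using that b by simp
      moreover have "t * quad_on {0..<n} B x \<ge> 0" using that a by simp
      ultimately show ?thesis using q by linarith
    qed
  qed
  have f0: "f 0 = 1" unfolding f_def C_def by (simp add: det_on_id)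
  have cont: "continuous_on {0..1} f"
    unfolding f_def det_on_def C_def by (intro continuous_intros)
  show ?thesis
  proof (rule ccontr)
    assume "\<not> ?thesis"
    hence "f 1 \<le> 0" using C1 f_def by simp
    then obtain t where t: "0 \<le> t" "t \<le> 1" "f t = 0"
      using IVT2'[of f 1 0 0, OF _ _ _ cont] f0 by auto
    thus False using pd_det_nz[OF Cpd[OF t(1,2)]] f_def by simp
  qed
qed

lemma perm_restrict:
  assumes pi: "\<pi> permutes (G1 \<union> G2)" and fin: "finite G1" "finite G2" and dis: "G1 \<inter> G2 = {}"
    and inv: "\<forall>u\<in>G1. \<pi> u \<in> G1"
  shows "\<pi> ` G1 = G1" "\<pi> ` G2 = G2"
    "(\<lambda>x. if x \<in> G1 then \<pi> x else x) permutes G1"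
    "(\<lambda>x. if x \<in> G2 then \<pi> x else x) permutes G2"
proof -
  have inj: "inj \<pi>" using pi by (rule permutes_inj)
  show i1: "\<pi> ` G1 = G1" using fin inv inj by (intro endo_inj_surj) (auto intro: inj_on_subset)
  have "\<pi> ` (G1 \<union> G2) = G1 \<union> G2" using pi by (rule permutes_image)
  hence "\<pi> ` G2 = (G1 \<union> G2) - \<pi> ` G1"
    using inj dis by (auto simp: image_Un dest: injD)
  thus i2: "\<pi> ` G2 = G2" using i1 dis by auto
  have b1: "bij_betw \<pi> G1 G1" using i1 inj_on_subset[OF inj, of G1] by (simp add: bij_betw_def)
  have b2: "bij_betw \<pi> G2 G2" using i2 inj_on_subset[OF inj, of G2] by (simp add: bij_betw_def)
  show "(\<lambda>x. if x \<in> G1 then \<pi> x else x) permutes G1"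
    by (rule bij_imp_permutes) (auto intro: bij_betw_cong[THEN iffD1, OF _ b1])
  show "(\<lambda>x. if x \<in> G2 then \<pi> x else x) permutes G2"
    by (rule bij_imp_permutes) (auto intro: bij_betw_cong[THEN iffD1, OF _ b2])
qed

lemma det_on_block:
  assumes fin: "finite G1" "finite G2" and dis: "G1 \<inter> G2 = {}"
    and z: "\<forall>u\<in>G1. \<forall>v\<in>G2. C u v = 0"
  shows "det_on (G1 \<union> G2) C = det_on G1 C * det_on G2 C"
proof -
  let ?G = "G1 \<union> G2"
  let ?P = "{\<pi>. \<pi> permutes ?G}"
  let ?Q = "{\<pi>. \<pi> permutes ?G \<and> (\<forall>u\<in>G1. \<pi> u \<in> G1)}"
  let ?g = "\<lambda>\<pi>. of_int (sign \<pi>) * (\<Prod>u\<in>?G. C u (\<pi> u))"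
  have finP: "finite ?P" using fin by (intro finite_permutations) auto
  have "det_on ?G C = sum ?g ?P" unfolding det_on_def ..
  also have "\<dots> = sum ?g ?Q"
  proof (rule sum.mono_neutral_right[OF finP])
    show "?Q \<subseteq> ?P" by auto
    show "\<forall>\<pi>\<in>?P - ?Q. ?g \<pi> = 0"
    proof
      fix \<pi> assume "\<pi> \<in> ?P - ?Q"
      then obtain u where u: "u \<in> G1" "\<pi> u \<notin> G1" and pi: "\<pi> permutes ?G" by auto
      have "\<pi> u \<in> ?G" using permutes_in_image[OF pi, of u] u by blast
      hence "C u (\<pi> u) = 0" using u z by auto
      hence "(\<Prod>u\<in>?G. C u (\<pi> u)) = 0" using u fin by (intro prod_zero bexI[of _ u]) auto
      thus "?g \<pi> = 0" by simp
    qed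
  qed
  finally have eq1: "det_on ?G C = sum ?g ?Q" .
  have eq2: "(\<Sum>(a,b) \<in> {a. a permutes G1} \<times> {b. b permutes G2}.
      of_int (sign a) * (\<Prod>u\<in>G1. C u (a u)) * (of_int (sign b) * (\<Prod>u\<in>G2. C u (b u)))) = sum ?g ?Q"
  proof (rule sum.reindex_bij_witness[where j = "\<lambda>(a,b). a \<circ> b"
        and i = "\<lambda>\<pi>. (\<lambda>x. if x \<in> G1 then \<pi> x else x, \<lambda>x. if x \<in> G2 then \<pi> x else x)"])
    fix ab assume ab: "ab \<in> {a. a permutes G1} \<times> {b. b permutes G2}"
    obtain a b where abd: "ab = (a,b)" "a permutes G1" "b permutes G2" using ab by auto
    have fa: "\<And>x. x \<notin> G1 \<Longrightarrow> a x = x" and fb: "\<And>x. x \<notin> G2 \<Longrightarrow> b x = x"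
      using abd permutes_not_in by metis+
    have ia: "\<And>x. x \<in> G1 \<Longrightarrow> a x \<in> G1" and ib: "\<And>x. x \<in> G2 \<Longrightarrow> b x \<in> G2"
      using abd permutes_in_image by metis+
    show "(\<lambda>\<pi>. (\<lambda>x. if x \<in> G1 then \<pi> x else x, \<lambda>x. if x \<in> G2 then \<pi> x else x)) ((\<lambda>(a,b). a \<circ> b) ab) = ab"
      using abd fa fb ib dis by (auto simp: fun_eq_iff) (metis disjoint_iff)+
    have pa: "a permutes ?G" "b permutes ?G" using abd by (auto intro: permutes_subset)
    show "(\<lambda>(a,b). a \<circ> b) ab \<in> ?Q"
      using abd permutes_compose[OF pa(2) pa(1)] fb ia dis by (auto simp: disjoint_iff)
    have sg: "sign (a \<circ> b) = sign a * sign b"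
      using abd fin by (intro sign_compose) (auto simp: permutation_permutes)
    have pr: "(\<Prod>u\<in>?G. C u ((a \<circ> b) u)) = (\<Prod>u\<in>G1. C u (a u)) * (\<Prod>u\<in>G2. C u (b u))"
    proof -
      have ab1: "(a \<circ> b) x = a x" if "x \<in> G1" for x
      proof - have "x \<notin> G2" using that dis by blast thus ?thesis using fb by simp qed
      have ab2: "(a \<circ> b) x = b x" if "x \<in> G2" for x
      proof - have "b x \<notin> G1" using ib[OF that] dis by blast thus ?thesis using fa by simp qed
      have "(\<Prod>u\<in>?G. C u ((a \<circ> b) u)) = (\<Prod>u\<in>G1. C u ((a \<circ> b) u)) * (\<Prod>u\<in>G2. C u ((a \<circ> b) u))"
        using fin dis by (rule prod.union_disjoint)
      also have "\<dots> = (\<Prod>u\<in>G1. C u (a u)) * (\<Prod>u\<in>G2. C u (b u))"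
        using ab1 ab2 by (intro arg_cong2[where f = "(*)"] prod.cong) auto
      finally show ?thesis .
    qed
    show "?g ((\<lambda>(a,b). a \<circ> b) ab) = (case ab of (a,b) \<Rightarrow>
      of_int (sign a) * (\<Prod>u\<in>G1. C u (a u)) * (of_int (sign b) * (\<Prod>u\<in>G2. C u (b u))))"
      using abd sg pr by simp
  next
    fix \<pi> assume "\<pi> \<in> ?Q"
    hence pi: "\<pi> permutes ?G" and inv: "\<forall>u\<in>G1. \<pi> u \<in> G1" by auto
    note r = perm_restrict[OF pi fin dis inv]
    show "(\<lambda>x. if x \<in> G1 then \<pi> x else x, \<lambda>x. if x \<in> G2 then \<pi> x else x)
       \<in> {a. a permutes G1} \<times> {b. b permutes G2}" using r(3,4) by auto
    have "\<pi> x \<in> G2" if "x \<in> G2" for x using r(2) that by auto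
    hence "\<pi> x \<notin> G1" if "x \<in> G2" for x using that dis by auto
    thus "(\<lambda>(a,b). a \<circ> b) (\<lambda>x. if x \<in> G1 then \<pi> x else x, \<lambda>x. if x \<in> G2 then \<pi> x else x) = \<pi>"
      using dis permutes_not_in[OF pi] by (auto simp: fun_eq_iff disjoint_iff)
  qed
  have eq3: "(\<Sum>(a,b) \<in> {a. a permutes G1} \<times> {b. b permutes G2}.
      of_int (sign a) * (\<Prod>u\<in>G1. C u (a u)) * (of_int (sign b) * (\<Prod>u\<in>G2. C u (b u)))) = det_on G1 C * det_on G2 C"
    unfolding det_on_def sum_product sum.cartesian_product
    by (intro sum.cong) (auto simp: algebra_simps)
  show ?thesis using eq1 eq2 eq3 by simp
qed

lemma pd_cong:
  assumes "\<forall>u\<in>H. \<forall>v\<in>H. X u v = Y u v"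
  shows "pd_on H X = pd_on H Y"
proof -
  have "quad_on H X x = quad_on H Y x" for x
    unfolding quad_on_def using assms by (intro sum.cong refl) auto
  moreover have "sym_on H X = sym_on H Y" unfolding sym_on_def using assms by auto
  ultimately show ?thesis unfolding pd_on_def by simp
qed

lemma det_cong:
  assumes "\<forall>u\<in>H. \<forall>v\<in>H. X u v = Y u v"
  shows "det_on H X = det_on H Y"
  unfolding det_on_def
proof (intro sum.cong refl arg_cong2[where f = "(*)"] prod.cong)
  fix \<pi> u assume "\<pi> \<in> {\<pi>. \<pi> permutes H}" "u \<in> H"
  hence "\<pi> u \<in> H" by (simp add: permutes_in_image)
  thus "X u (\<pi> u) = Y u (\<pi> u)" using assms \<open>u \<in> H\<close> by auto
qed

lemma objL_cong:
  assumes "\<forall>i\<in>N. \<forall>u\<in>H. \<forall>v\<in>H. X i u v = Y i u v"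
  shows "objL H N S lam X = objL H N S lam Y"
proof -
  have "tr_prod_on H (X i) (S i) = tr_prod_on H (Y i) (S i)" if "i \<in> N" for i
    unfolding tr_prod_on_def using assms that by (intro sum.cong refl) auto
  moreover have "det_on H (X i) = det_on H (Y i)" if "i \<in> N" for i
    using assms that by (intro det_cong) auto
  moreover have "sqrt (\<Sum>i\<in>N. (X i u v)^2) = sqrt (\<Sum>i\<in>N. (Y i u v)^2)"
    if "(u,v) \<in> {(u,v). u \<in> H \<and> v \<in> H \<and> u \<noteq> v}" for u v
    using assms that by (intro arg_cong[where f = sqrt] sum.cong) auto
  ultimately show ?thesis unfolding objL_def
    by (intro arg_cong2[where f = "(+)"] arg_cong2[where f = "(*)"] refl sum.cong) auto
qed

lemma sum_restrict_sub:
  assumes "finite G" "H \<subseteq> G"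
  shows "(\<Sum>u\<in>G. if u \<in> H then f u else 0) = (\<Sum>u\<in>H. f u)"
proof -
  have "(\<Sum>u\<in>G. if u \<in> H then f u else 0) = sum f (G \<inter> H)"
    using assms by (simp add: sum.inter_restrict)
  also have "G \<inter> H = H" using assms by auto
  finally show ?thesis .
qed

lemma pd_nonneg:
  assumes "pd_on G A" shows "quad_on G A x \<ge> 0"
proof (cases "\<exists>u\<in>G. x u \<noteq> 0")
  case True thus ?thesis using assms unfolding pd_on_def by (auto intro: less_imp_le)
next
  case False thus ?thesis unfolding quad_on_def by simp
qed

lemma pd_sub:
  assumes "finite G" "H \<subseteq> G" "pd_on G A"
  shows "pd_on H A"
  unfolding pd_on_def
proof safe
  show "sym_on H A" using assms unfolding pd_on_def sym_on_def by blast
next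
  fix x :: "nat \<Rightarrow> real" and u assume u: "u \<in> H" "x u \<noteq> 0"
  define y where "y u = (if u \<in> H then x u else 0)" for u
  have "quad_on G A y = quad_on H A x"
  proof -
    have "quad_on G A y = (\<Sum>u\<in>G. if u \<in> H then (\<Sum>v\<in>G. if v \<in> H then x u * A u v * x v else 0) else 0)"
      unfolding quad_on_def y_def by (intro sum.cong refl) (auto intro: sum.cong)
    also have "\<dots> = quad_on H A x" unfolding quad_on_def using assms
      by (simp add: sum_restrict_sub)
    finally show ?thesis .
  qed
  moreover have "\<exists>u\<in>G. y u \<noteq> 0" using u assms(2) by (auto simp: y_def)
  ultimately show "quad_on H A x > 0" using assms(3) unfolding pd_on_def by auto
qed

lemma quad_block:
  assumes fin: "finite G1" "finite G2" and dis: "G1 \<inter> G2 = {}"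
    and z: "\<forall>u\<in>G1. \<forall>v\<in>G2. A u v = 0 \<and> A v u = 0"
  shows "quad_on (G1 \<union> G2) A x = quad_on G1 A x + quad_on G2 A x"
proof -
  have c1: "(\<Sum>v\<in>G2. x u * A u v * x v) = 0" if "u \<in> G1" for u using z that by auto
  have c2: "(\<Sum>v\<in>G1. x u * A u v * x v) = 0" if "u \<in> G2" for u using z that by auto
  show ?thesis unfolding quad_on_def
    using fin dis c1 c2 by (simp add: sum.union_disjoint sum.distrib)
qed

lemma pd_block:
  assumes fin: "finite G1" "finite G2" and dis: "G1 \<inter> G2 = {}"
    and z: "\<forall>u\<in>G1. \<forall>v\<in>G2. A u v = 0 \<and> A v u = 0"
    and p1: "pd_on G1 A" and p2: "pd_on G2 A"
  shows "pd_on (G1 \<union> G2) A"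
  unfolding pd_on_def
proof (intro conjI allI impI)
  show "sym_on (G1 \<union> G2) A" using p1 p2 z unfolding pd_on_def sym_on_def by auto
next
  fix x :: "nat \<Rightarrow> real" assume "\<exists>u\<in>G1 \<union> G2. x u \<noteq> 0"
  then obtain u where u: "u \<in> G1 \<union> G2" "x u \<noteq> 0" by blast
  have q: "quad_on (G1 \<union> G2) A x = quad_on G1 A x + quad_on G2 A x"
    using quad_block[OF fin dis z] .
  have n1: "quad_on G1 A x \<ge> 0" "quad_on G2 A x \<ge> 0" using p1 p2 pd_nonneg by auto
  show "quad_on (G1 \<union> G2) A x > 0"
  proof (cases "u \<in> G1")
    case True
    hence "quad_on G1 A x > 0" using p1 u unfolding pd_on_def by auto
    thus ?thesis using q n1 by linarith
  next
    case False
    hence "quad_on G2 A x > 0" using p2 u unfolding pd_on_def by auto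
    thus ?thesis using q n1 by linarith
  qed
qed

lemma pd_id: "finite K \<Longrightarrow> pd_on K (\<lambda>u v. if u = v then 1 else 0)"
  unfolding pd_on_def
proof (intro conjI allI impI)
  show "sym_on K (\<lambda>u v. if u = v then 1 else (0::real))" unfolding sym_on_def by auto
next
  fix x :: "nat \<Rightarrow> real" assume "finite K" "\<exists>u\<in>K. x u \<noteq> 0"
  then obtain u where "u \<in> K" "x u \<noteq> 0" by blast
  have "quad_on K (\<lambda>u v. if u = v then 1 else 0) x = (\<Sum>u\<in>K. x u * x u)"
  proof -
    have e: "x u * (if u = v then 1 else 0) * x v = (if v = u then x u * x v else 0)" for u v :: nat
      by auto
    show ?thesis unfolding quad_on_def e using \<open>finite K\<close> by simp
  qed
  thus "quad_on K (\<lambda>u v. if u = v then 1 else 0) x > 0"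
    using quad_pos_sq[of K x] \<open>finite K\<close> \<open>u \<in> K\<close> \<open>x u \<noteq> 0\<close> by auto
qed

lemma det_pos:
  assumes "finite H" "pd_on H A"
  shows "det_on H A > 0"
proof -
  obtain n where n: "H \<subseteq> {0..<n}" using assms(1) finite_nat_bounded by (auto simp: subset_eq)
  define K where "K = {0..<n} - H"
  define X where "X u v = (if u \<in> H \<and> v \<in> H then A u v else if u \<in> K \<and> v \<in> K then (if u = v then 1 else 0) else 0)" for u v
  have un: "H \<union> K = {0..<n}" and dis: "H \<inter> K = {}" and fK: "finite K" using n by (auto simp: K_def)
  have z: "\<forall>u\<in>H. \<forall>v\<in>K. X u v = 0 \<and> X v u = 0" using dis by (auto simp: X_def)
  have pH: "pd_on H X" using assms(2) by (subst pd_cong[of H X A]) (auto simp: X_def)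
  have pK: "pd_on K X" using pd_id[OF fK] dis by (subst pd_cong[of K X "\<lambda>u v. if u = v then 1 else 0"]) (auto simp: X_def)
  have "pd_on {0..<n} X" using pd_block[OF assms(1) fK dis z pH pK] un by simp
  hence "det_on {0..<n} X > 0" by (rule pd_det_pos)
  moreover have "det_on {0..<n} X = det_on H X * det_on K X"
    using det_on_block[OF assms(1) fK dis] z un by auto
  moreover have "det_on H X = det_on H A" by (rule det_cong) (auto simp: X_def)
  moreover have "det_on K X = det_on K (\<lambda>u v. if u = v then 1 else 0)"
    using dis by (intro det_cong) (auto simp: X_def)
  moreover have "\<dots> = 1" using fK by (rule det_on_id)
  ultimately show ?thesis by simp
qed

lemma tr_block:
  assumes fin: "finite G1" "finite G2" and dis: "G1 \<inter> G2 = {}"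
    and z: "\<forall>u\<in>G1. \<forall>v\<in>G2. A u v = 0 \<and> A v u = 0"
  shows "tr_prod_on (G1 \<union> G2) A B = tr_prod_on G1 A B + tr_prod_on G2 A B"
proof -
  have c1: "(\<Sum>v\<in>G2. A u v * B v u) = 0" if "u \<in> G1" for u using z that by auto
  have c2: "(\<Sum>v\<in>G1. A u v * B v u) = 0" if "u \<in> G2" for u using z that by auto
  show ?thesis unfolding tr_prod_on_def
    using fin dis c1 c2 by (simp add: sum.union_disjoint sum.distrib)
qed

lemma obj_split:
  assumes fin: "finite G1" "finite G2" and dis: "G1 \<inter> G2 = {}"
    and z: "\<forall>i\<in>N. \<forall>u\<in>G1. \<forall>v\<in>G2. X i u v = 0 \<and> X i v u = 0"
    and d: "\<forall>i\<in>N. det_on G1 (X i) > 0 \<and> det_on G2 (X i) > 0"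
  shows "objL (G1 \<union> G2) N S lam X = objL G1 N S lam X + objL G2 N S lam X"
proof -
  let ?E = "\<lambda>H. {(u,v). u \<in> H \<and> v \<in> H \<and> u \<noteq> v}"
  let ?f = "\<lambda>(u,v). sqrt (\<Sum>i\<in>N. (X i u v)^2)"
  have t: "tr_prod_on (G1 \<union> G2) (X i) (S i) - ln (det_on (G1 \<union> G2) (X i)) =
     (tr_prod_on G1 (X i) (S i) - ln (det_on G1 (X i))) + (tr_prod_on G2 (X i) (S i) - ln (det_on G2 (X i)))"
    if "i \<in> N" for i
  proof -
    have "det_on (G1 \<union> G2) (X i) = det_on G1 (X i) * det_on G2 (X i)"
      using z that by (intro det_on_block[OF fin dis]) auto
    hence "ln (det_on (G1 \<union> G2) (X i)) = ln (det_on G1 (X i)) + ln (det_on G2 (X i))"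
      using d that by (simp add: ln_mult_pos)
    moreover have "tr_prod_on (G1 \<union> G2) (X i) (S i) = tr_prod_on G1 (X i) (S i) + tr_prod_on G2 (X i) (S i)"
      using z that by (intro tr_block[OF fin dis]) auto
    ultimately show ?thesis by simp
  qed
  have finE: "finite (?E (G1 \<union> G2))"
    by (rule finite_subset[of _ "(G1 \<union> G2) \<times> (G1 \<union> G2)"]) (use fin in auto)
  have "sum ?f (?E (G1 \<union> G2)) = sum ?f (?E G1 \<union> ?E G2)"
  proof (rule sum.mono_neutral_right[OF finE])
    show "?E G1 \<union> ?E G2 \<subseteq> ?E (G1 \<union> G2)" by auto
    show "\<forall>x\<in>?E (G1 \<union> G2) - (?E G1 \<union> ?E G2). ?f x = 0"
    proof
      fix x assume x: "x \<in> ?E (G1 \<union> G2) - (?E G1 \<union> ?E G2)"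
      obtain u v where uv: "x = (u,v)" by force
      have "(u \<in> G1 \<and> v \<in> G2) \<or> (u \<in> G2 \<and> v \<in> G1)" using x uv by auto
      hence "\<forall>i\<in>N. X i u v = 0" using z by auto
      thus "?f x = 0" using uv by simp
    qed
  qed
  also have "\<dots> = sum ?f (?E G1) + sum ?f (?E G2)"
  proof (rule sum.union_disjoint)
    show "finite (?E G1)" by (rule finite_subset[OF _ finE]) auto
    show "finite (?E G2)" by (rule finite_subset[OF _ finE]) auto
    show "?E G1 \<inter> ?E G2 = {}" using dis by auto
  qed
  finally have pen: "sum ?f (?E (G1 \<union> G2)) = sum ?f (?E G1) + sum ?f (?E G2)" .
  have sumt: "(\<Sum>i\<in>N. tr_prod_on (G1 \<union> G2) (X i) (S i) - ln (det_on (G1 \<union> G2) (X i))) =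
     (\<Sum>i\<in>N. tr_prod_on G1 (X i) (S i) - ln (det_on G1 (X i))) +
     (\<Sum>i\<in>N. tr_prod_on G2 (X i) (S i) - ln (det_on G2 (X i)))"
    unfolding sum.distrib[symmetric] by (rule sum.cong[OF refl]) (rule t)
  show ?thesis unfolding objL_def sumt pen by (simp add: algebra_simps)
qed

lemma half:
  assumes fin: "finite A" "finite B" and dis: "A \<inter> B = {}"
    and mini: "is_minimizer (A \<union> B) N S lam \<Omega>"
    and z: "\<forall>i\<in>N. \<forall>u\<in>A. \<forall>v\<in>B. \<Omega> i u v = 0 \<and> \<Omega> i v u = 0"
  shows "is_minimizer A N S lam \<Omega>"
proof -
  have finAB: "finite (A \<union> B)" using fin by simp
  have pdG: "pd_on (A \<union> B) (\<Omega> i)" if "i \<in> N" for i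
    using mini that unfolding is_minimizer_def feasible_def by auto
  have pdA: "pd_on A (\<Omega> i)" if "i \<in> N" for i using pd_sub[OF finAB _ pdG[OF that]] by auto
  have pdB: "pd_on B (\<Omega> i)" if "i \<in> N" for i using pd_sub[OF finAB _ pdG[OF that]] by auto
  have featA: "feasible A N \<Omega>" using pdA unfolding feasible_def by auto
  have "objL A N S lam \<Omega> \<le> objL A N S lam \<Omega>'" if f': "feasible A N \<Omega>'" for \<Omega>'
  proof -
    define W where "W i u v = (if u \<in> A \<and> v \<in> A then \<Omega>' i u v else if u \<in> B \<and> v \<in> B then \<Omega> i u v else 0)" for i u v
    have zW: "\<forall>i\<in>N. \<forall>u\<in>A. \<forall>v\<in>B. W i u v = 0 \<and> W i v u = 0" using dis by (auto simp: W_def)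
    have cA: "\<forall>u\<in>A. \<forall>v\<in>A. W i u v = \<Omega>' i u v" for i by (auto simp: W_def)
    have cB: "\<forall>u\<in>B. \<forall>v\<in>B. W i u v = \<Omega> i u v" for i using dis by (auto simp: W_def)
    have pWA: "pd_on A (W i)" if "i \<in> N" for i
      using f' that pd_cong[OF cA[of i]] unfolding feasible_def by auto
    have pWB: "pd_on B (W i)" if "i \<in> N" for i
      using pdB[OF that] pd_cong[OF cB[of i]] by auto
    have "feasible (A \<union> B) N W" unfolding feasible_def
      using pd_block[OF fin dis] zW pWA pWB by auto
    hence le: "objL (A \<union> B) N S lam \<Omega> \<le> objL (A \<union> B) N S lam W"
      using mini unfolding is_minimizer_def by auto
    have s1: "objL (A \<union> B) N S lam \<Omega> = objL A N S lam \<Omega> + objL B N S lam \<Omega>"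
      using z pdA pdB det_pos fin by (intro obj_split[OF fin dis]) auto
    have s2: "objL (A \<union> B) N S lam W = objL A N S lam W + objL B N S lam W"
      using zW pWA pWB det_pos fin by (intro obj_split[OF fin dis]) auto
    have "objL A N S lam W = objL A N S lam \<Omega>'" using cA by (intro objL_cong) auto
    moreover have "objL B N S lam W = objL B N S lam \<Omega>" using cB by (intro objL_cong) auto
    ultimately show ?thesis using le s1 s2 by linarith
  qed
  thus ?thesis using featA unfolding is_minimizer_def by auto
qed

theorem theorem1:
  fixes p :: nat and N :: "'i set" and S \<Omega> :: "'i \<Rightarrow> nat \<Rightarrow> nat \<Rightarrow> real"
    and lam :: real and G1 G2 :: "nat set"
  assumes "p \<ge> 2"
    and "finite N" and "N \<noteq> {}"
    and "\<forall>i\<in>N. psd_on {0..<p} (S i)"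
    and "lam > 0"
    and "G1 \<union> G2 = {0..<p}" and "G1 \<inter> G2 = {}" and "G1 \<noteq> {}" and "G2 \<noteq> {}"
    and "is_minimizer {0..<p} N S lam \<Omega>"
    and "\<forall>i\<in>N. \<forall>u\<in>G1. \<forall>v\<in>G2. \<Omega> i u v = 0 \<and> \<Omega> i v u = 0"
  shows "is_minimizer G1 N S lam \<Omega> \<and> is_minimizer G2 N S lam \<Omega>"
proof
  have f1: "finite G1" and f2: "finite G2"
    using assms(6) by (metis finite_Un finite_atLeastLessThan)+
  show "is_minimizer G1 N S lam \<Omega>"
    using half[OF f1 f2 assms(7)] assms(6,10,11) by simp
  have "G2 \<union> G1 = {0..<p}" "G2 \<inter> G1 = {}" using assms(6,7) by auto
  moreover have "\<forall>i\<in>N. \<forall>u\<in>G2. \<forall>v\<in>G1. \<Omega> i u v = 0 \<and> \<Omega> i v u = 0" using assms(11) by auto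
  ultimately show "is_minimizer G2 N S lam \<Omega>"
    using half[OF f2 f1] assms(10) by simp
qed

end
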